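(* There exists a unique $\mathbb{Q}(q)$-algebra anti-isomorphism $\sigma\colon \mathrm{El}^\vee_\epsilon\to \mathrm{El}_\epsilon$ with $\sigma(\mathcal{E}_i)=q^{-\epsilon}\mathcal{E}_{i+1}$ for all $i\in\mathbb{Z}$ (anti-isomorphism: $\mathbb{Q}(q)$-linear bijection with $\sigma(uv)=\sigma(v)\sigma(u)$ and $\sigma(1)=1$).
   Context: $\mathbb{Q}(q)$ is the field of rational functions in $q$ over $\mathbb{Q}$; $[2]=q+q^{-1}$. Fix $\epsilon\in\{1,-1\}$. For $i,j\in\mathbb{Z}$ put $b_{ij}=-2$ if $j\in\{i,i+1\}$ and $b_{ij}=4\,\mathrm{sgn}(j-i)(-1)^{j-i}$ otherwise. The $q$-electrical algebra $\mathrm{El}_\epsilon$ is the $\mathbb{Q}(q)$-algebra generated by $\mathcal{E}_i$, $i\in\mathbb{Z}$, subject to: (1) $\mathcal{E}_i\mathcal{E}_j=q^{b_{ij}}\mathcal{E}_j\mathcal{E}_i$ if $|i-j|>1$; (2) $q^3\mathcal{E}_i^2\mathcal{E}_{i+1}-[2]\mathcal{E}_i\mathcal{E}_{i+1}\mathcal{E}_i+q^{-3}\mathcal{E}_{i+1}\mathcal{E}_i^2=-q^{\epsilon}[2]\mathcal{E}_i$; (3) $q^{-3}\mathcal{E}_i^2\mathcal{E}_{i-1}-[2]\mathcal{E}_i\mathcal{E}_{i-1}\mathcal{E}_i+q^{3}\mathcal{E}_{i-1}\mathcal{E}_i^2=-q^{\epsilon}[2]\mathcal{E}_i$, for all $i,j\in\mathbb{Z}$.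 The algebra $\mathrm{El}^\vee_\epsilon$ is the $\mathbb{Q}(q)$-algebra generated by $\mathcal{E}_i$, $i\in\mathbb{Z}$, subject to: (1') $\mathcal{E}_i\mathcal{E}_j=q^{-b_{ij}}\mathcal{E}_j\mathcal{E}_i$ if $|i-j|>1$; (2') $q^{-3}\mathcal{E}_i^2\mathcal{E}_{i+1}-[2]\mathcal{E}_i\mathcal{E}_{i+1}\mathcal{E}_i+q^{3}\mathcal{E}_{i+1}\mathcal{E}_i^2=-q^{-\epsilon}[2]\mathcal{E}_i$; (3') $q^{3}\mathcal{E}_i^2\mathcal{E}_{i-1}-[2]\mathcal{E}_i\mathcal{E}_{i-1}\mathcal{E}_i+q^{-3}\mathcal{E}_{i-1}\mathcal{E}_i^2=-q^{-\epsilon}[2]\mathcal{E}_i$. *)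

theory Defs
  imports "HOL-Algebra.QuotRing" "HOL-Computational_Algebra.Fraction_Field"
          "HOL-Computational_Algebra.Polynomial"
begin

type_synonym K = "rat poly fract"

definition qq :: K where "qq = Fraction_Field.Fract [:0, 1:] 1"
definition qint2 :: K where "qint2 = qq + inverse qq"

text \<open>Free associative Q(q)-algebra on generators indexed by int:
  elements are finitely supported functions from words (int lists) to Q(q).\<close>
type_synonym fa = "int list \<Rightarrow> K"

definition fa_carrier :: "fa set" where
  "fa_carrier = {f. finite {w. f w \<noteq> 0}}"
definition fa_add :: "fa \<Rightarrow> fa \<Rightarrow> fa" where
  "fa_add f g = (\<lambda>w. f w + g w)"
definition fa_mult :: "fa \<Rightarrow> fa \<Rightarrow> fa" where
  "fa_mult f g = (\<lambda>w. \<Sum>k\<le>length w. f (take k w) * g (drop k w))"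
definition fa_zero :: fa where "fa_zero = (\<lambda>w. 0)"
definition fa_one :: fa where "fa_one = (\<lambda>w. if w = [] then 1 else 0)"
definition fa_smul :: "K \<Rightarrow> fa \<Rightarrow> fa" where
  "fa_smul c f = (\<lambda>w. c * f w)"
definition gen :: "int \<Rightarrow> fa" where
  "gen i = (\<lambda>w. if w = [i] then 1 else 0)"

definition FA :: "fa ring" where
  "FA = \<lparr>carrier = fa_carrier, Group.monoid.mult = fa_mult, Group.monoid.one = fa_one,
         Ring.ring.zero = fa_zero, Ring.ring.add = fa_add\<rparr>"

definition fa_diff :: "fa \<Rightarrow> fa \<Rightarrow> fa" where
  "fa_diff f g = (\<lambda>w. f w - g w)"
definition m3 :: "fa \<Rightarrow> fa \<Rightarrow> fa \<Rightarrow> fa" where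
  "m3 a b c = fa_mult a (fa_mult b c)"

definition bexp :: "int \<Rightarrow> int \<Rightarrow> int" where
  "bexp i j = (if j = i \<or> j = i + 1 then -2
               else 4 * sgn (j - i) * (-1) ^ nat \<bar>j - i\<bar>)"

text \<open>Defining relations of El_eps (written as elements LHS - RHS).\<close>
definition rels :: "int \<Rightarrow> fa set" where
  "rels eps =
     {fa_diff (fa_mult (gen i) (gen j)) (fa_smul (qq powi bexp i j) (fa_mult (gen j) (gen i)))
        | i j. \<bar>i - j\<bar> > 1}
   \<union> {fa_add (fa_add (fa_add (fa_smul (qq powi 3) (m3 (gen i) (gen i) (gen (i+1))))
                           (fa_smul (- qint2) (m3 (gen i) (gen (i+1)) (gen i))))
                   (fa_smul (qq powi (-3)) (m3 (gen (i+1)) (gen i) (gen i))))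
            (fa_smul (qq powi eps * qint2) (gen i)) | i. True}
   \<union> {fa_add (fa_add (fa_add (fa_smul (qq powi (-3)) (m3 (gen i) (gen i) (gen (i-1))))
                           (fa_smul (- qint2) (m3 (gen i) (gen (i-1)) (gen i))))
                   (fa_smul (qq powi 3) (m3 (gen (i-1)) (gen i) (gen i))))
            (fa_smul (qq powi eps * qint2) (gen i)) | i. True}"

definition relsv :: "int \<Rightarrow> fa set" where
  "relsv eps =
     {fa_diff (fa_mult (gen i) (gen j)) (fa_smul (qq powi (- bexp i j)) (fa_mult (gen j) (gen i)))
        | i j. \<bar>i - j\<bar> > 1}
   \<union> {fa_add (fa_add (fa_add (fa_smul (qq powi (-3)) (m3 (gen i) (gen i) (gen (i+1))))
                           (fa_smul (- qint2) (m3 (gen i) (gen (i+1)) (gen i))))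
                   (fa_smul (qq powi 3) (m3 (gen (i+1)) (gen i) (gen i))))
            (fa_smul (qq powi (-eps) * qint2) (gen i)) | i. True}
   \<union> {fa_add (fa_add (fa_add (fa_smul (qq powi 3) (m3 (gen i) (gen i) (gen (i-1))))
                           (fa_smul (- qint2) (m3 (gen i) (gen (i-1)) (gen i))))
                   (fa_smul (qq powi (-3)) (m3 (gen (i-1)) (gen i) (gen i))))
            (fa_smul (qq powi (-eps) * qint2) (gen i)) | i. True}"

text \<open>The algebras as quotients of the free algebra by two-sided ideals
  (HOL-Algebra's ideal is two-sided).\<close>
definition El_ideal :: "int \<Rightarrow> fa set" where "El_ideal eps = genideal FA (rels eps)"
definition Elv_ideal :: "int \<Rightarrow> fa set" where "Elv_ideal eps = genideal FA (relsv eps)"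

definition El :: "int \<Rightarrow> fa set ring" where "El eps = FA Quot El_ideal eps"
definition Elv :: "int \<Rightarrow> fa set ring" where "Elv eps = FA Quot Elv_ideal eps"

definition cls :: "fa set \<Rightarrow> fa \<Rightarrow> fa set" where
  "cls I f = I +>\<^bsub>FA\<^esub> f"

text \<open>Q(q)-algebra anti-isomorphism FA/I -> FA/J. Linearity is expressed through
  the structure maps c |-> c*1 of the two Q(q)-algebras.\<close>
definition anti_iso :: "fa set \<Rightarrow> fa set \<Rightarrow> (fa set \<Rightarrow> fa set) \<Rightarrow> bool" where
  "anti_iso I J s \<longleftrightarrow>
     bij_betw s (carrier (FA Quot I)) (carrier (FA Quot J))
   \<and> (\<forall>x\<in>carrier (FA Quot I). \<forall>y\<in>carrier (FA Quot I).
        s (x \<oplus>\<^bsub>FA Quot I\<^esub> y) = s x \<oplus>\<^bsub>FA Quot J\<^esub> s y)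
   \<and> (\<forall>c. \<forall>x\<in>carrier (FA Quot I).
        s (cls I (fa_smul c fa_one) \<otimes>\<^bsub>FA Quot I\<^esub> x)
          = cls J (fa_smul c fa_one) \<otimes>\<^bsub>FA Quot J\<^esub> s x)
   \<and> (\<forall>x\<in>carrier (FA Quot I). \<forall>y\<in>carrier (FA Quot I).
        s (x \<otimes>\<^bsub>FA Quot I\<^esub> y) = s y \<otimes>\<^bsub>FA Quot J\<^esub> s x)
   \<and> s \<one>\<^bsub>FA Quot I\<^esub> = \<one>\<^bsub>FA Quot J\<^esub>"

end

theory Submission imports Defs begin

definition splits :: "int list \<Rightarrow> (int list \<times> int list) set" where
  "splits w = {p. fst p @ snd p = w}"

lemma splits_img: "splits w = (\<lambda>k. (take k w, drop k w)) ` {..length w}"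
proof
  show "splits w \<subseteq> (\<lambda>k. (take k w, drop k w)) ` {..length w}"
  proof
    fix p assume "p \<in> splits w"
    then have "fst p @ snd p = w" by (simp add: splits_def)
    then have "p = (take (length (fst p)) w, drop (length (fst p)) w)" and "length (fst p) \<le> length w"
      by (auto simp: prod_eq_iff)
    then show "p \<in> (\<lambda>k. (take k w, drop k w)) ` {..length w}" by blast
  qed
qed (auto simp: splits_def)

lemma finite_splits[simp]: "finite (splits w)"
  by (simp add: splits_img)

lemma fa_mult_splits: "fa_mult f g w = (\<Sum>p\<in>splits w. f (fst p) * g (snd p))"
proof -
  have "inj_on (\<lambda>k. (take k w, drop k w)) {..length w}"
    by (rule inj_onI) (metis atMost_iff length_take min.absorb2 prod.inject)
  then show ?thesis unfolding fa_mult_def splits_img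
    by (simp add: sum.reindex)
qed


definition splits3 :: "int list \<Rightarrow> (int list \<times> int list \<times> int list) set" where
  "splits3 w = {t. fst t @ fst (snd t) @ snd (snd t) = w}"

lemma finite_splits3[simp]: "finite (splits3 w)"
proof -
  have "splits3 w \<subseteq> (\<lambda>(p,q). (fst q, snd q, snd p)) ` (SIGMA p:splits w. splits (fst p))"
    by (auto simp: splits3_def splits_def image_iff)
  then show ?thesis
    by (rule finite_subset) (auto intro!: finite_SigmaI)
qed

lemma fa_mult_assoc_l: "fa_mult (fa_mult f g) h w = (\<Sum>t\<in>splits3 w. f (fst t) * g (fst (snd t)) * h (snd (snd t)))"
proof -
  have "fa_mult (fa_mult f g) h w = (\<Sum>p\<in>splits w. \<Sum>q\<in>splits (fst p). f (fst q) * g (snd q) * h (snd p))"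
    by (simp add: fa_mult_splits sum_distrib_right)
  also have "\<dots> = (\<Sum>(p,q)\<in>(SIGMA p:splits w. splits (fst p)). f (fst q) * g (snd q) * h (snd p))"
    by (rule sum.Sigma) auto
  also have "\<dots> = (\<Sum>t\<in>splits3 w. f (fst t) * g (fst (snd t)) * h (snd (snd t)))"
    by (rule sum.reindex_bij_witness[where i="\<lambda>t. ((fst t @ fst (snd t), snd (snd t)), (fst t, fst (snd t)))"
          and j="\<lambda>(p,q). (fst q, snd q, snd p)"])
       (auto simp: splits3_def splits_def)
  finally show ?thesis .
qed

lemma fa_mult_assoc_r: "fa_mult f (fa_mult g h) w = (\<Sum>t\<in>splits3 w. f (fst t) * g (fst (snd t)) * h (snd (snd t)))"
proof -
  have "fa_mult f (fa_mult g h) w = (\<Sum>p\<in>splits w. \<Sum>q\<in>splits (snd p). f (fst p) * g (fst q) * h (snd q))"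
    by (simp add: fa_mult_splits sum_distrib_left mult.assoc)
  also have "\<dots> = (\<Sum>(p,q)\<in>(SIGMA p:splits w. splits (snd p)). f (fst p) * g (fst q) * h (snd q))"
    by (rule sum.Sigma) auto
  also have "\<dots> = (\<Sum>t\<in>splits3 w. f (fst t) * g (fst (snd t)) * h (snd (snd t)))"
    by (rule sum.reindex_bij_witness[where i="\<lambda>t. ((fst t, fst (snd t) @ snd (snd t)), (fst (snd t), snd (snd t)))"
          and j="\<lambda>(p,q). (fst p, fst q, snd q)"])
       (auto simp: splits3_def splits_def)
  finally show ?thesis .
qed

lemma fa_mult_assoc: "fa_mult (fa_mult f g) h = fa_mult f (fa_mult g h)"
  by (rule ext) (simp add: fa_mult_assoc_l fa_mult_assoc_r)

lemma fa_one_mult[simp]: "fa_mult fa_one f = f"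
proof (rule ext)
  fix w
  have "fa_mult fa_one f w = (\<Sum>p\<in>splits w. if p = ([], w) then f w else 0)"
    unfolding fa_mult_splits fa_one_def
    by (rule sum.cong) (auto simp: splits_def)
  also have "\<dots> = f w" by (subst sum.delta) (auto simp: splits_def[symmetric], auto simp: splits_def)
  finally show "fa_mult fa_one f w = f w" .
qed

lemma fa_mult_one[simp]: "fa_mult f fa_one = f"
proof (rule ext)
  fix w
  have "fa_mult f fa_one w = (\<Sum>p\<in>splits w. if p = (w, []) then f w else 0)"
    unfolding fa_mult_splits fa_one_def
    by (rule sum.cong) (auto simp: splits_def)
  also have "\<dots> = f w" by (subst sum.delta) (auto simp: splits_def[symmetric], auto simp: splits_def)
  finally show "fa_mult f fa_one w = f w" .
qed

lemma fa_mult_add_l: "fa_mult (fa_add f g) h = fa_add (fa_mult f h) (fa_mult g h)"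
  by (rule ext) (simp add: fa_mult_def fa_add_def distrib_right sum.distrib)

lemma fa_mult_add_r: "fa_mult h (fa_add f g) = fa_add (fa_mult h f) (fa_mult h g)"
  by (rule ext) (simp add: fa_mult_def fa_add_def distrib_left sum.distrib)

lemma fa_mult_smul_l: "fa_mult (fa_smul c f) g = fa_smul c (fa_mult f g)"
  by (rule ext) (simp add: fa_mult_def fa_smul_def sum_distrib_left mult.assoc)

lemma fa_mult_smul_r: "fa_mult f (fa_smul c g) = fa_smul c (fa_mult f g)"
  by (rule ext) (simp add: fa_mult_def fa_smul_def sum_distrib_left mult.left_commute)

lemma supp_mult: "{w. fa_mult f g w \<noteq> 0} \<subseteq> (\<lambda>(u,v). u @ v) ` ({w. f w \<noteq> 0} \<times> {w. g w \<noteq> 0})"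
proof
  fix w assume "w \<in> {w. fa_mult f g w \<noteq> 0}"
  then have "(\<Sum>p\<in>splits w. f (fst p) * g (snd p)) \<noteq> 0" by (simp add: fa_mult_splits)
  then obtain p where "p \<in> splits w" "f (fst p) * g (snd p) \<noteq> 0" by (meson sum.neutral)
  then show "w \<in> (\<lambda>(u,v). u @ v) ` ({w. f w \<noteq> 0} \<times> {w. g w \<noteq> 0})"
    by (auto simp: splits_def image_iff intro!: bexI[of _ "(fst p, snd p)"])
qed

lemma carr_mult: "f \<in> fa_carrier \<Longrightarrow> g \<in> fa_carrier \<Longrightarrow> fa_mult f g \<in> fa_carrier"
  unfolding fa_carrier_def using supp_mult[of f g]
  by (auto intro: finite_subset)

lemma carr_add: "f \<in> fa_carrier \<Longrightarrow> g \<in> fa_carrier \<Longrightarrow> fa_add f g \<in> fa_carrier"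
  unfolding fa_carrier_def fa_add_def
  by (rule CollectI, erule CollectE, erule CollectE, rule finite_subset[of _ "{w. f w \<noteq> 0} \<union> {w. g w \<noteq> 0}"]) auto

lemma carr_smul: "f \<in> fa_carrier \<Longrightarrow> fa_smul c f \<in> fa_carrier"
  unfolding fa_carrier_def fa_smul_def
  by (auto elim!: finite_subset[rotated])

lemma carr_one[simp]: "fa_one \<in> fa_carrier"
  unfolding fa_carrier_def fa_one_def by simp

lemma carr_zero[simp]: "fa_zero \<in> fa_carrier"
  unfolding fa_carrier_def fa_zero_def by simp

lemma carr_gen[simp]: "gen i \<in> fa_carrier"
  unfolding fa_carrier_def gen_def by simp

lemma FA_simps[simp]: "carrier FA = fa_carrier" "Group.monoid.mult FA = fa_mult" "one FA = fa_one"
  "Ring.ring.zero FA = fa_zero" "Ring.ring.add FA = fa_add"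
  by (simp_all add: FA_def)

lemma ring_FA: "ring FA"
proof (rule ringI)
  show "abelian_group FA"
  proof (rule abelian_groupI)
    fix x assume "x \<in> carrier FA"
    then have "(\<lambda>w. - x w) \<in> carrier FA" "fa_add (\<lambda>w. - x w) x = fa_zero"
      by (auto simp: fa_carrier_def fa_add_def fa_zero_def)
    then show "\<exists>y\<in>carrier FA. y \<oplus>\<^bsub>FA\<^esub> x = \<zero>\<^bsub>FA\<^esub>" by auto
  qed (auto simp: carr_add[unfolded fa_add_def] carr_zero[unfolded fa_zero_def] fa_add_def fa_zero_def add.assoc add.commute)
  show "monoid FA"
    by (rule monoidI) (auto simp: carr_mult fa_mult_assoc)
qed (auto simp: fa_mult_add_l fa_mult_add_r)

interpretation FAR: ring FA by (rule ring_FA)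


lemma qq_nz[simp]: "qq \<noteq> 0"
  unfolding qq_def by (simp add: eq_fract Zero_fract_def)

definition phi :: "int \<Rightarrow> int \<Rightarrow> fa \<Rightarrow> fa" where
  "phi a d f = (\<lambda>w. qq powi (a * int (length w)) * f (map (\<lambda>x. x + d) (rev w)))"

lemma phi_phi: "a + b = 0 \<Longrightarrow> d + e = 0 \<Longrightarrow> phi a d (phi b e f) = f"
proof (rule ext)
  fix w :: "int list" assume ab: "a + b = 0" and de: "d + e = 0"
  have "qq powi (a * int (length w)) * qq powi (b * int (length w)) = qq powi ((a+b) * int (length w))"
    by (simp add: power_int_add distrib_right)
  also have "\<dots> = 1" using ab by simp
  finally have 1: "qq powi (a * int (length w)) * qq powi (b * int (length w)) = 1" .
  have 2: "map (\<lambda>x. x + e) (rev (map (\<lambda>x. x + d) (rev w))) = w"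
    using de by (simp add: rev_map o_def add.assoc)
  show "phi a d (phi b e f) w = f w"
    unfolding phi_def using 1 2 by (simp add: mult.assoc[symmetric])
qed

lemma phi_add: "phi a d (fa_add f g) = fa_add (phi a d f) (phi a d g)"
  by (rule ext) (simp add: phi_def fa_add_def distrib_left)

lemma phi_diff: "phi a d (fa_diff f g) = fa_diff (phi a d f) (phi a d g)"
  by (rule ext) (simp add: phi_def fa_diff_def right_diff_distrib)

lemma phi_smul: "phi a d (fa_smul c f) = fa_smul c (phi a d f)"
  by (rule ext) (simp add: phi_def fa_smul_def mult.left_commute)

lemma phi_one[simp]: "phi a d fa_one = fa_one"
  by (rule ext) (simp add: phi_def fa_one_def)

lemma phi_zero[simp]: "phi a d fa_zero = fa_zero"
  by (rule ext) (simp add: phi_def fa_zero_def)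

lemma phi_gen: "phi a d (gen i) = fa_smul (qq powi a) (gen (i - d))"
  by (rule ext) (auto simp: phi_def fa_smul_def gen_def)

lemma phi_carr: "f \<in> fa_carrier \<Longrightarrow> phi a d f \<in> fa_carrier"
proof -
  assume "f \<in> fa_carrier"
  then have fin: "finite {w. f w \<noteq> 0}" by (simp add: fa_carrier_def)
  have "{w. phi a d f w \<noteq> 0} \<subseteq> (\<lambda>w. rev (map (\<lambda>x. x - d) w)) ` {w. f w \<noteq> 0}"
    by (auto simp: phi_def image_iff rev_map o_def intro!: exI[of _ "map (\<lambda>x. x + d) (rev _)"])
  then show ?thesis using fin by (auto simp: fa_carrier_def intro: finite_subset)
qed

lemma rev_aux: "a @ b = map (\<lambda>x. x + d) (rev w) \<Longrightarrow>
  map (\<lambda>x. x - d) (rev b) @ map (\<lambda>x. x - d) (rev a) = (w::int list)"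
proof -
  assume "a @ b = map (\<lambda>x. x + d) (rev w)"
  then have "rev (a @ b) = map (\<lambda>x. x + d) w" by (simp add: rev_map)
  then have "map (\<lambda>x. x - d) (rev (a @ b)) = w" by (simp add: o_def)
  then show ?thesis by simp
qed

lemma phi_mult: "phi a d (fa_mult f g) = fa_mult (phi a d g) (phi a d f)"
proof (rule ext)
  fix w
  let ?m = "\<lambda>l. map (\<lambda>x. x + d) (rev l)"
  have "phi a d (fa_mult f g) w = (\<Sum>p\<in>splits (?m w). qq powi (a * int (length w)) * (f (fst p) * g (snd p)))"
    by (simp add: phi_def fa_mult_splits sum_distrib_left)
  also have "\<dots> = (\<Sum>p\<in>splits w. (qq powi (a * int (length (fst p))) * g (?m (fst p))) *
                   (qq powi (a * int (length (snd p))) * f (?m (snd p))))"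
  proof (rule sym, rule sum.reindex_bij_witness[where i="\<lambda>p. (rev (map (\<lambda>x. x - d) (snd p)), rev (map (\<lambda>x. x - d) (fst p)))"
          and j="\<lambda>p. (?m (snd p), ?m (fst p))"])
    fix p assume "p \<in> splits w"
    then have w: "w = fst p @ snd p" by (simp add: splits_def)
    have "qq powi (a * int (length w)) = qq powi (a * int (length (fst p))) * qq powi (a * int (length (snd p)))"
      by (simp add: w power_int_add distrib_left)
    then show "qq powi (a * int (length w)) * (f (fst (?m (snd p), ?m (fst p))) * g (snd (?m (snd p), ?m (fst p)))) =
          (qq powi (a * int (length (fst p))) * g (?m (fst p))) *
                   (qq powi (a * int (length (snd p))) * f (?m (snd p)))"
      by (simp add: ac_simps)
  qed (auto simp: splits_def rev_map o_def rev_aux)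
  also have "\<dots> = fa_mult (phi a d g) (phi a d f) w"
    by (simp add: fa_mult_splits phi_def)
  finally show "phi a d (fa_mult f g) w = fa_mult (phi a d g) (phi a d f) w" .
qed

lemma phi_m3: "phi a d (m3 x y z) = m3 (phi a d z) (phi a d y) (phi a d x)"
  by (simp add: m3_def phi_mult fa_mult_assoc)


lemma fa_smul_smul[simp]: "fa_smul a (fa_smul b f) = fa_smul (a * b) f"
  by (rule ext) (simp add: fa_smul_def)

lemma m3_smul: "m3 (fa_smul a x) (fa_smul b y) (fa_smul c z) = fa_smul (a * b * c) (m3 x y z)"
  by (simp add: m3_def fa_mult_smul_l fa_mult_smul_r ac_simps)

lemma mult_smul2: "fa_mult (fa_smul a x) (fa_smul b y) = fa_smul (a * b) (fa_mult x y)"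
  by (simp add: fa_mult_smul_l fa_mult_smul_r ac_simps)

lemma bexp_shift: "bexp (j + 1) (i + 1) = bexp j i" "bexp (j - 1) (i - 1) = bexp j i"
  by (simp_all add: bexp_def)

lemma bexp_swap: "\<bar>i - j\<bar> > 1 \<Longrightarrow> bexp j i = - bexp i j"
  unfolding bexp_def by (cases "j < i") (auto simp: sgn_if abs_minus_commute abs_if)


lemma Phi_rels:
  assumes "r \<in> relsv eps"
  shows "\<exists>c r'. r' \<in> rels eps \<and> phi (-eps) (-1) r = fa_smul c r'"
  using assms unfolding relsv_def
proof (elim UnE CollectE exE conjE)
  fix i j assume ij: "\<bar>i - j\<bar> > 1" and r: "r = fa_diff (fa_mult (gen i) (gen j)) (fa_smul (qq powi (- bexp i j)) (fa_mult (gen j) (gen i)))"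
  let ?r' = "fa_diff (fa_mult (gen (j+1)) (gen (i+1))) (fa_smul (qq powi bexp (j+1) (i+1)) (fa_mult (gen (i+1)) (gen (j+1))))"
  have ij': "\<bar>(j+1) - (i+1)\<bar> > 1" using ij by arith
  have "?r' \<in> rels eps" unfolding rels_def by (rule UnI1, rule UnI1) (use ij' in blast)
  moreover have "phi (-eps) (-1) r = fa_smul (qq powi (-eps) * qq powi (-eps)) ?r'"
    unfolding r bexp_shift bexp_swap[OF ij]
    apply (simp only: phi_diff phi_smul phi_mult phi_gen mult_smul2 fa_smul_smul diff_minus_eq_add)
    apply (rule ext)
    apply (simp add: fa_diff_def fa_smul_def field_simps)
    done
  ultimately show ?thesis by blast
next
  fix i assume r: "r = fa_add (fa_add (fa_add (fa_smul (qq powi (-3)) (m3 (gen i) (gen i) (gen (i+1))))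
                           (fa_smul (- qint2) (m3 (gen i) (gen (i+1)) (gen i))))
                   (fa_smul (qq powi 3) (m3 (gen (i+1)) (gen i) (gen i))))
            (fa_smul (qq powi (-eps) * qint2) (gen i))"
  let ?k = "i + 1"
  let ?r' = "fa_add (fa_add (fa_add (fa_smul (qq powi 3) (m3 (gen ?k) (gen ?k) (gen (?k+1))))
                           (fa_smul (- qint2) (m3 (gen ?k) (gen (?k+1)) (gen ?k))))
                   (fa_smul (qq powi (-3)) (m3 (gen (?k+1)) (gen ?k) (gen ?k))))
            (fa_smul (qq powi eps * qint2) (gen ?k))"
  have "?r' \<in> rels eps" unfolding rels_def by blast
  moreover have "phi (-eps) (-1) r = fa_smul (qq powi (- eps) * qq powi (- eps) * qq powi (- eps)) ?r'"
    unfolding r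
    apply (simp only: phi_add phi_smul phi_m3 phi_gen m3_smul fa_smul_smul diff_minus_eq_add)
    apply (rule ext)
    apply (simp add: fa_add_def fa_smul_def power_int_add power_int_minus field_simps)
    done
  ultimately show ?thesis by blast
next
  fix i assume r: "r = fa_add (fa_add (fa_add (fa_smul (qq powi 3) (m3 (gen i) (gen i) (gen (i-1))))
                           (fa_smul (- qint2) (m3 (gen i) (gen (i-1)) (gen i))))
                   (fa_smul (qq powi (-3)) (m3 (gen (i-1)) (gen i) (gen i))))
            (fa_smul (qq powi (-eps) * qint2) (gen i))"
  let ?k = "i + 1"
  let ?r' = "fa_add (fa_add (fa_add (fa_smul (qq powi (-3)) (m3 (gen ?k) (gen ?k) (gen (?k-1))))
                           (fa_smul (- qint2) (m3 (gen ?k) (gen (?k-1)) (gen ?k))))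
                   (fa_smul (qq powi 3) (m3 (gen (?k-1)) (gen ?k) (gen ?k))))
            (fa_smul (qq powi eps * qint2) (gen ?k))"
  have "?r' \<in> rels eps" unfolding rels_def by blast
  moreover have "phi (-eps) (-1) r = fa_smul (qq powi (- eps) * qq powi (- eps) * qq powi (- eps)) ?r'"
    unfolding r
    apply (simp only: phi_add phi_smul phi_m3 phi_gen m3_smul fa_smul_smul diff_minus_eq_add)
    apply (rule ext)
    apply (simp add: fa_add_def fa_smul_def power_int_add power_int_minus field_simps)
    done
  ultimately show ?thesis by blast
qed

lemma Psi_rels:
  assumes "r \<in> rels eps"
  shows "\<exists>c r'. r' \<in> relsv eps \<and> phi eps 1 r = fa_smul c r'"
  using assms unfolding rels_def
proof (elim UnE CollectE exE conjE)
  fix i j assume ij: "\<bar>i - j\<bar> > 1" and r: "r = fa_diff (fa_mult (gen i) (gen j)) (fa_smul (qq powi (bexp i j)) (fa_mult (gen j) (gen i)))"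
  let ?r' = "fa_diff (fa_mult (gen (j-1)) (gen (i-1))) (fa_smul (qq powi (- bexp (j-1) (i-1))) (fa_mult (gen (i-1)) (gen (j-1))))"
  have ij': "\<bar>(j-1) - (i-1)\<bar> > 1" using ij by arith
  have "?r' \<in> relsv eps" unfolding relsv_def by (rule UnI1, rule UnI1) (use ij' in blast)
  moreover have "phi eps 1 r = fa_smul (qq powi eps * qq powi eps) ?r'"
    unfolding r bexp_shift bexp_swap[OF ij]
    apply (simp only: phi_diff phi_smul phi_mult phi_gen mult_smul2 fa_smul_smul diff_minus_eq_add)
    apply (rule ext)
    apply (simp add: fa_diff_def fa_smul_def field_simps)
    done
  ultimately show ?thesis by blast
next
  fix i assume r: "r = fa_add (fa_add (fa_add (fa_smul (qq powi 3) (m3 (gen i) (gen i) (gen (i+1))))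
                           (fa_smul (- qint2) (m3 (gen i) (gen (i+1)) (gen i))))
                   (fa_smul (qq powi (-3)) (m3 (gen (i+1)) (gen i) (gen i))))
            (fa_smul (qq powi eps * qint2) (gen i))"
  let ?k = "i - 1"
  let ?r' = "fa_add (fa_add (fa_add (fa_smul (qq powi (-3)) (m3 (gen ?k) (gen ?k) (gen (?k+1))))
                           (fa_smul (- qint2) (m3 (gen ?k) (gen (?k+1)) (gen ?k))))
                   (fa_smul (qq powi 3) (m3 (gen (?k+1)) (gen ?k) (gen ?k))))
            (fa_smul (qq powi (-eps) * qint2) (gen ?k))"
  have "?r' \<in> relsv eps" unfolding relsv_def by blast
  moreover have "phi eps 1 r = fa_smul (qq powi eps * qq powi eps * qq powi eps) ?r'"
    unfolding r
    apply (simp only: phi_add phi_smul phi_m3 phi_gen m3_smul fa_smul_smul diff_minus_eq_add)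
    apply (rule ext)
    apply (simp add: fa_add_def fa_smul_def power_int_add power_int_minus field_simps)
    done
  ultimately show ?thesis by blast
next
  fix i assume r: "r = fa_add (fa_add (fa_add (fa_smul (qq powi (-3)) (m3 (gen i) (gen i) (gen (i-1))))
                           (fa_smul (- qint2) (m3 (gen i) (gen (i-1)) (gen i))))
                   (fa_smul (qq powi 3) (m3 (gen (i-1)) (gen i) (gen i))))
            (fa_smul (qq powi eps * qint2) (gen i))"
  let ?k = "i - 1"
  let ?r' = "fa_add (fa_add (fa_add (fa_smul (qq powi 3) (m3 (gen ?k) (gen ?k) (gen (?k-1))))
                           (fa_smul (- qint2) (m3 (gen ?k) (gen (?k-1)) (gen ?k))))
                   (fa_smul (qq powi (-3)) (m3 (gen (?k-1)) (gen ?k) (gen ?k))))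
            (fa_smul (qq powi (-eps) * qint2) (gen ?k))"
  have "?r' \<in> relsv eps" unfolding relsv_def by blast
  moreover have "phi eps 1 r = fa_smul (qq powi eps * qq powi eps * qq powi eps) ?r'"
    unfolding r
    apply (simp only: phi_add phi_smul phi_m3 phi_gen m3_smul fa_smul_smul diff_minus_eq_add)
    apply (rule ext)
    apply (simp add: fa_add_def fa_smul_def power_int_add power_int_minus field_simps)
    done
  ultimately show ?thesis by blast
qed


lemma carr_diff: "f \<in> fa_carrier \<Longrightarrow> g \<in> fa_carrier \<Longrightarrow> fa_diff f g \<in> fa_carrier"
proof -
  assume "f \<in> fa_carrier" "g \<in> fa_carrier"
  then have "fa_add f (fa_smul (-1) g) \<in> fa_carrier" by (simp add: carr_add carr_smul)
  moreover have "fa_add f (fa_smul (-1) g) = fa_diff f g" by (rule ext) (simp add: fa_add_def fa_smul_def fa_diff_def)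
  ultimately show ?thesis by simp
qed

lemma carr_m3: "x \<in> fa_carrier \<Longrightarrow> y \<in> fa_carrier \<Longrightarrow> z \<in> fa_carrier \<Longrightarrow> m3 x y z \<in> fa_carrier"
  by (simp add: m3_def carr_mult)

lemma rels_carr: "rels eps \<subseteq> carrier FA"
  unfolding rels_def by (auto intro!: carr_add carr_smul carr_m3 carr_diff carr_mult)

lemma relsv_carr: "relsv eps \<subseteq> carrier FA"
  unfolding relsv_def by (auto intro!: carr_add carr_smul carr_m3 carr_diff carr_mult)

lemma ideal_El: "ideal (El_ideal eps) FA"
  unfolding El_ideal_def by (rule FAR.genideal_ideal[OF rels_carr])

lemma ideal_Elv: "ideal (Elv_ideal eps) FA"
  unfolding Elv_ideal_def by (rule FAR.genideal_ideal[OF relsv_carr])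

lemma smul_eq_mult: "fa_smul c f = fa_mult (fa_smul c fa_one) f"
  by (simp add: fa_mult_smul_l)

lemma smul_ideal: "ideal I FA \<Longrightarrow> r \<in> I \<Longrightarrow> fa_smul c r \<in> I"
  by (subst smul_eq_mult) (metis FA_simps(1,2) carr_one carr_smul ideal.I_l_closed)

lemma a_inv_FA: "x \<in> fa_carrier \<Longrightarrow> \<ominus>\<^bsub>FA\<^esub> x = fa_smul (-1) x"
proof -
  assume x: "x \<in> fa_carrier"
  have "fa_add (fa_smul (-1) x) x = fa_zero"
    by (rule ext) (simp add: fa_add_def fa_smul_def fa_zero_def)
  then show ?thesis using FAR.minus_equality[of "fa_smul (-1) x" x] x carr_smul[OF x] by simp
qed

lemma preimage_ideal:
  assumes J: "ideal J FA"
  shows "ideal {x \<in> fa_carrier. phi a d x \<in> J} FA"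
proof (rule idealI[OF ring_FA])
  interpret J: ideal J FA by (rule J)
  let ?P = "{x \<in> fa_carrier. phi a d x \<in> J}"
  show "subgroup ?P (add_monoid FA)"
  proof (rule FAR.add.subgroupI)
    show "?P \<subseteq> carrier FA" by auto
    have "fa_zero \<in> ?P" using J.additive_subgroup_axioms additive_subgroup.zero_closed by fastforce
    then show "?P \<noteq> {}" by blast
  next
    fix x assume "x \<in> ?P"
    then have x: "x \<in> fa_carrier" "phi a d x \<in> J" by auto
    have "fa_smul (-1) (phi a d x) \<in> J" by (rule smul_ideal[OF J x(2)])
    then show "\<ominus>\<^bsub>FA\<^esub> x \<in> ?P"
      using a_inv_FA[OF x(1)] x(1) carr_smul[OF x(1)] by (simp add: phi_smul)
  next
    fix x y assume "x \<in> ?P" "y \<in> ?P"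
    then show "x \<oplus>\<^bsub>FA\<^esub> y \<in> ?P"
      using J.a_closed by (auto simp: carr_add phi_add)
  qed
next
  fix r x assume "r \<in> {x \<in> fa_carrier. phi a d x \<in> J}" "x \<in> carrier FA"
  then show "x \<otimes>\<^bsub>FA\<^esub> r \<in> {x \<in> fa_carrier. phi a d x \<in> J}" using ideal.I_r_closed[OF J] phi_carr
    by (auto simp: carr_mult phi_mult)
next
  fix r x assume "r \<in> {x \<in> fa_carrier. phi a d x \<in> J}" "x \<in> carrier FA"
  then show "r \<otimes>\<^bsub>FA\<^esub> x \<in> {x \<in> fa_carrier. phi a d x \<in> J}" using ideal.I_l_closed[OF J] phi_carr
    by (auto simp: carr_mult phi_mult)
qed

lemma Phi_ideal: "phi (-eps) (-1) ` Elv_ideal eps \<subseteq> El_ideal eps"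
proof -
  have "relsv eps \<subseteq> {x \<in> fa_carrier. phi (-eps) (-1) x \<in> El_ideal eps}"
  proof
    fix r assume r: "r \<in> relsv eps"
    then obtain c r' where "r' \<in> rels eps" "phi (-eps) (-1) r = fa_smul c r'" using Phi_rels by blast
    moreover have "r' \<in> El_ideal eps" using \<open>r' \<in> rels eps\<close> FAR.genideal_self[OF rels_carr]
      by (auto simp: El_ideal_def)
    ultimately show "r \<in> {x \<in> fa_carrier. phi (-eps) (-1) x \<in> El_ideal eps}"
      using r relsv_carr smul_ideal[OF ideal_El] by auto
  qed
  then have "Elv_ideal eps \<subseteq> {x \<in> fa_carrier. phi (-eps) (-1) x \<in> El_ideal eps}"
    unfolding Elv_ideal_def by (rule FAR.genideal_minimal[OF preimage_ideal[OF ideal_El]])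
  then show ?thesis by auto
qed

lemma Psi_ideal: "phi eps 1 ` El_ideal eps \<subseteq> Elv_ideal eps"
proof -
  have "rels eps \<subseteq> {x \<in> fa_carrier. phi eps 1 x \<in> Elv_ideal eps}"
  proof
    fix r assume r: "r \<in> rels eps"
    then obtain c r' where "r' \<in> relsv eps" "phi eps 1 r = fa_smul c r'" using Psi_rels by blast
    moreover have "r' \<in> Elv_ideal eps" using \<open>r' \<in> relsv eps\<close> FAR.genideal_self[OF relsv_carr]
      by (auto simp: Elv_ideal_def)
    ultimately show "r \<in> {x \<in> fa_carrier. phi eps 1 x \<in> Elv_ideal eps}"
      using r rels_carr smul_ideal[OF ideal_Elv] by auto
  qed
  then have "El_ideal eps \<subseteq> {x \<in> fa_carrier. phi eps 1 x \<in> Elv_ideal eps}"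
    unfolding El_ideal_def by (rule FAR.genideal_minimal[OF preimage_ideal[OF ideal_Elv]])
  then show ?thesis by auto
qed

lemma Phi_ideal_eq: "phi (-eps) (-1) ` Elv_ideal eps = El_ideal eps"
proof
  show "El_ideal eps \<subseteq> phi (-eps) (-1) ` Elv_ideal eps"
  proof
    fix x assume "x \<in> El_ideal eps"
    then have "phi eps 1 x \<in> Elv_ideal eps" using Psi_ideal by auto
    moreover have "x = phi (-eps) (-1) (phi eps 1 x)" by (simp add: phi_phi)
    ultimately show "x \<in> phi (-eps) (-1) ` Elv_ideal eps" by blast
  qed
qed (rule Phi_ideal)


lemma cls_hom: "ideal K FA \<Longrightarrow> cls K \<in> ring_hom FA (FA Quot K)"
proof -
  assume "ideal K FA"
  moreover have "cls K = (+>\<^bsub>FA\<^esub>) K" by (rule ext) (simp add: cls_def)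
  ultimately show ?thesis by (simp add: ideal.rcos_ring_hom)
qed

lemma cls_add: "ideal K FA \<Longrightarrow> f \<in> fa_carrier \<Longrightarrow> g \<in> fa_carrier \<Longrightarrow>
  cls K (fa_add f g) = cls K f \<oplus>\<^bsub>FA Quot K\<^esub> cls K g"
  using ring_hom_add[OF cls_hom, of K f g] by simp

lemma cls_mult: "ideal K FA \<Longrightarrow> f \<in> fa_carrier \<Longrightarrow> g \<in> fa_carrier \<Longrightarrow>
  cls K (fa_mult f g) = cls K f \<otimes>\<^bsub>FA Quot K\<^esub> cls K g"
  using ring_hom_mult[OF cls_hom, of K f g] by simp

lemma cls_one: "ideal K FA \<Longrightarrow> cls K fa_one = \<one>\<^bsub>FA Quot K\<^esub>"
  using ring_hom_one[OF cls_hom, of K] by simp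

lemma carrier_quot: "carrier (FA Quot K) = cls K ` fa_carrier"
  unfolding FactRing_def A_RCOSETS_def RCOSETS_def cls_def a_r_coset_def by auto

lemma cls_closed: "f \<in> fa_carrier \<Longrightarrow> cls K f \<in> carrier (FA Quot K)"
  by (simp add: carrier_quot)

lemma cls_img: "cls K f = (\<lambda>h. fa_add h f) ` K"
  unfolding cls_def a_r_coset_def r_coset_def by auto

lemma phi_coset:
  shows "phi (-eps) (-1) ` cls (Elv_ideal eps) f = cls (El_ideal eps) (phi (-eps) (-1) f)"
  unfolding cls_img image_image phi_add Phi_ideal_eq[symmetric] by simp

lemma mult_smul_one: "fa_mult f (fa_smul c fa_one) = fa_smul c f"
  by (simp add: fa_mult_smul_r)

lemma one_smul_mult: "fa_mult (fa_smul c fa_one) f = fa_smul c f"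
  by (simp add: fa_mult_smul_l)

lemma s_anti:
  "anti_iso (Elv_ideal eps) (El_ideal eps) (\<lambda>X. phi (-eps) (-1) ` X)"
proof -
  let ?I = "Elv_ideal eps" and ?J = "El_ideal eps" and ?P = "phi (-eps) (-1)"
  have I: "ideal ?I FA" by (rule ideal_Elv)
  have J: "ideal ?J FA" by (rule ideal_El)
  have inj: "inj ?P"
  proof (rule injI)
    fix x y assume "?P x = ?P y"
    then have "phi eps 1 (?P x) = phi eps 1 (?P y)" by simp
    then show "x = y" by (simp add: phi_phi)
  qed
  have Pcarr: "?P ` fa_carrier = fa_carrier"
  proof
    show "fa_carrier \<subseteq> ?P ` fa_carrier"
    proof
      fix g assume "g \<in> fa_carrier"
      then have "phi eps 1 g \<in> fa_carrier" "g = ?P (phi eps 1 g)" by (simp_all add: phi_carr phi_phi)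
      then show "g \<in> ?P ` fa_carrier" by blast
    qed
  qed (auto simp: phi_carr)
  have bij: "bij_betw (\<lambda>X. ?P ` X) (carrier (FA Quot ?I)) (carrier (FA Quot ?J))"
  proof (rule bij_betw_imageI)
    show "inj_on (\<lambda>X. ?P ` X) (carrier (FA Quot ?I))"
      by (rule inj_onI) (simp add: inj_image_eq_iff[OF inj])
    have "(\<lambda>X. ?P ` X) ` carrier (FA Quot ?I) = cls ?J ` (?P ` fa_carrier)"
      unfolding carrier_quot image_image by (rule image_cong) (auto simp: phi_coset)
    then show "(\<lambda>X. ?P ` X) ` carrier (FA Quot ?I) = carrier (FA Quot ?J)"
      by (simp add: Pcarr carrier_quot)
  qed
  show ?thesis unfolding anti_iso_def
  proof (intro conjI ballI allI)
    show "bij_betw (\<lambda>X. ?P ` X) (carrier (FA Quot ?I)) (carrier (FA Quot ?J))" by (rule bij)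
  next
    fix x y assume "x \<in> carrier (FA Quot ?I)" "y \<in> carrier (FA Quot ?I)"
    then obtain f g where f: "f \<in> fa_carrier" "x = cls ?I f" and g: "g \<in> fa_carrier" "y = cls ?I g"
      by (auto simp: carrier_quot)
    show "?P ` (x \<oplus>\<^bsub>FA Quot ?I\<^esub> y) = ?P ` x \<oplus>\<^bsub>FA Quot ?J\<^esub> ?P ` y"
      using f g by (simp add: cls_add[OF I, symmetric] cls_add[OF J, symmetric] phi_coset carr_add phi_carr phi_add)
    show "?P ` (x \<otimes>\<^bsub>FA Quot ?I\<^esub> y) = ?P ` y \<otimes>\<^bsub>FA Quot ?J\<^esub> ?P ` x"
      using f g by (simp add: cls_mult[OF I, symmetric] cls_mult[OF J, symmetric] phi_coset carr_mult phi_carr phi_mult)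
  next
    fix c x assume "x \<in> carrier (FA Quot ?I)"
    then obtain f where f: "f \<in> fa_carrier" "x = cls ?I f"
      by (auto simp: carrier_quot)
    show "?P ` (cls ?I (fa_smul c fa_one) \<otimes>\<^bsub>FA Quot ?I\<^esub> x) = cls ?J (fa_smul c fa_one) \<otimes>\<^bsub>FA Quot ?J\<^esub> ?P ` x"
      using f by (simp add: cls_mult[OF I, symmetric] cls_mult[OF J, symmetric] phi_coset carr_mult phi_carr
          phi_mult carr_smul phi_smul mult_smul_one one_smul_mult)
  next
    show "?P ` \<one>\<^bsub>FA Quot ?I\<^esub> = \<one>\<^bsub>FA Quot ?J\<^esub>"
      by (simp add: cls_one[OF I, symmetric] cls_one[OF J, symmetric] phi_coset)
  qed
qed


definition fa_mono :: "int list \<Rightarrow> fa" where "fa_mono w = (\<lambda>v. if v = w then 1 else 0)"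

lemma fa_mono_carr: "fa_mono w \<in> fa_carrier"
  unfolding fa_mono_def fa_carrier_def by simp

lemma gen_mult_fa_mono: "fa_mult (gen i) (fa_mono w) = fa_mono (i # w)"
proof (rule ext)
  fix x
  have "fa_mult (gen i) (fa_mono w) x = (\<Sum>p\<in>splits x. if p = ([i], w) then 1 else 0)"
    unfolding fa_mult_splits by (rule sum.cong) (auto simp: gen_def fa_mono_def prod_eq_iff)
  also have "\<dots> = fa_mono (i # w) x"
    by (subst sum.delta[OF finite_splits]) (simp add: splits_def fa_mono_def)
  finally show "fa_mult (gen i) (fa_mono w) x = fa_mono (i # w) x" .
qed

lemma fa_mono_nil: "fa_mono [] = fa_one"
  by (rule ext) (simp add: fa_mono_def fa_one_def)

lemma fa_induct:
  assumes f: "f \<in> fa_carrier"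
    and sc: "\<And>c. P (fa_smul c fa_one)"
    and gn: "\<And>i. P (gen i)"
    and ad: "\<And>f g. f \<in> fa_carrier \<Longrightarrow> g \<in> fa_carrier \<Longrightarrow> P f \<Longrightarrow> P g \<Longrightarrow> P (fa_add f g)"
    and mu: "\<And>f g. f \<in> fa_carrier \<Longrightarrow> g \<in> fa_carrier \<Longrightarrow> P f \<Longrightarrow> P g \<Longrightarrow> P (fa_mult f g)"
  shows "P f"
proof -
  have pm: "P (fa_mono w)" for w
  proof (induction w)
    case Nil
    have "P (fa_smul 1 fa_one)" by (rule sc)
    moreover have "fa_smul 1 fa_one = fa_one" by (rule ext) (simp add: fa_smul_def)
    ultimately show ?case by (simp add: fa_mono_nil)
  next
    case (Cons i w)
    then show ?case using mu[OF carr_gen fa_mono_carr gn Cons] by (simp add: gen_mult_fa_mono)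
  qed
  have psm: "P (fa_smul c (fa_mono w))" for c w
    using mu[OF carr_smul[OF carr_one] fa_mono_carr sc pm] by (simp add: one_smul_mult)
  have "\<forall>g. g \<in> fa_carrier \<and> {w. g w \<noteq> 0} \<subseteq> F \<longrightarrow> P g" if "finite F" for F
    using that
  proof (induction F rule: finite_induct)
    case empty
    show ?case
    proof (intro allI impI)
      fix g assume "g \<in> fa_carrier \<and> {w. g w \<noteq> 0} \<subseteq> {}"
      then have "g = fa_smul 0 fa_one" by (auto simp: fa_smul_def)
      then show "P g" using sc by simp
    qed
  next
    case (insert w F)
    show ?case
    proof (intro allI impI)
      fix g assume g: "g \<in> fa_carrier \<and> {w. g w \<noteq> 0} \<subseteq> insert w F"
      let ?h = "g(w := 0)"
      have hc: "?h \<in> fa_carrier" using g unfolding fa_carrier_def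
        by (auto elim: finite_subset[rotated])
      have "{v. ?h v \<noteq> 0} \<subseteq> F" using g by auto
      then have "P ?h" using insert.IH hc by blast
      then have Ph: "P (fa_add (fa_smul (g w) (fa_mono w)) ?h)" by (rule ad[OF carr_smul[OF fa_mono_carr] hc psm])
      have eq: "g = fa_add (fa_smul (g w) (fa_mono w)) ?h"
        by (rule ext) (simp add: fa_add_def fa_smul_def fa_mono_def)
      show "P g" by (rule ssubst[OF eq], rule Ph)
    qed
  qed
  then show ?thesis using f by (auto simp: fa_carrier_def)
qed

lemma ai_add: "anti_iso I J t \<Longrightarrow> ideal I FA \<Longrightarrow> f \<in> fa_carrier \<Longrightarrow> g \<in> fa_carrier \<Longrightarrow>
  t (cls I (fa_add f g)) = t (cls I f) \<oplus>\<^bsub>FA Quot J\<^esub> t (cls I g)"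
  unfolding anti_iso_def by (simp add: cls_add cls_closed)

lemma ai_mult: "anti_iso I J t \<Longrightarrow> ideal I FA \<Longrightarrow> f \<in> fa_carrier \<Longrightarrow> g \<in> fa_carrier \<Longrightarrow>
  t (cls I (fa_mult f g)) = t (cls I g) \<otimes>\<^bsub>FA Quot J\<^esub> t (cls I f)"
  unfolding anti_iso_def by (simp add: cls_mult cls_closed)

lemma ai_scal: "anti_iso I J t \<Longrightarrow> ideal I FA \<Longrightarrow> ideal J FA \<Longrightarrow>
  t (cls I (fa_smul c fa_one)) = cls J (fa_smul c fa_one)"
proof -
  assume t: "anti_iso I J t" and I: "ideal I FA" and J: "ideal J FA"
  have c: "fa_smul c fa_one \<in> fa_carrier" by (simp add: carr_smul)
  have "cls I (fa_smul c fa_one) = cls I (fa_smul c fa_one) \<otimes>\<^bsub>FA Quot I\<^esub> \<one>\<^bsub>FA Quot I\<^esub>"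
    using cls_mult[OF I c carr_one] by (simp add: cls_one[OF I])
  then have "t (cls I (fa_smul c fa_one)) = cls J (fa_smul c fa_one) \<otimes>\<^bsub>FA Quot J\<^esub> t \<one>\<^bsub>FA Quot I\<^esub>"
    using t cls_closed[of "fa_one" I] unfolding anti_iso_def by (metis FAR.one_closed FA_simps(3) cls_one[OF I] carr_one)
  also have "\<dots> = cls J (fa_smul c fa_one)"
    using t cls_mult[OF J c carr_one] unfolding anti_iso_def by (simp add: cls_one[OF J])
  finally show ?thesis .
qed

lemma ai_unique:
  assumes t: "anti_iso I J t" and u: "anti_iso I J u" and I: "ideal I FA" and J: "ideal J FA"
    and g: "\<And>i. t (cls I (gen i)) = u (cls I (gen i))"
    and f: "f \<in> fa_carrier"
  shows "t (cls I f) = u (cls I f)"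
proof (rule fa_induct[where P="\<lambda>f. t (cls I f) = u (cls I f)", OF f])
  fix c show "t (cls I (fa_smul c fa_one)) = u (cls I (fa_smul c fa_one))"
    by (simp add: ai_scal[OF t I J] ai_scal[OF u I J])
next
  fix i show "t (cls I (gen i)) = u (cls I (gen i))" by (rule g)
next
  fix f g assume "f \<in> fa_carrier" "g \<in> fa_carrier" "t (cls I f) = u (cls I f)" "t (cls I g) = u (cls I g)"
  then show "t (cls I (fa_add f g)) = u (cls I (fa_add f g))"
    by (simp add: ai_add[OF t I] ai_add[OF u I])
next
  fix f g assume "f \<in> fa_carrier" "g \<in> fa_carrier" "t (cls I f) = u (cls I f)" "t (cls I g) = u (cls I g)"
  then show "t (cls I (fa_mult f g)) = u (cls I (fa_mult f g))"
    by (simp add: ai_mult[OF t I] ai_mult[OF u I])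
qed

theorem mainTheorem2:
  fixes eps :: int
  assumes "eps \<in> {1, -1}"
  shows "\<exists>s. anti_iso (Elv_ideal eps) (El_ideal eps) s
           \<and> (\<forall>i. s (cls (Elv_ideal eps) (gen i))
                   = cls (El_ideal eps) (fa_smul (qq powi (- eps)) (gen (i + 1))))
           \<and> (\<forall>t. anti_iso (Elv_ideal eps) (El_ideal eps) t
                  \<and> (\<forall>i. t (cls (Elv_ideal eps) (gen i))
                        = cls (El_ideal eps) (fa_smul (qq powi (- eps)) (gen (i + 1))))
                  \<longrightarrow> (\<forall>x\<in>carrier (Elv eps). t x = s x))"
proof (intro exI conjI allI impI ballI)
  let ?s = "\<lambda>X. phi (-eps) (-1) ` X"
  show sa: "anti_iso (Elv_ideal eps) (El_ideal eps) ?s" by (rule s_anti)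
  show sg: "?s (cls (Elv_ideal eps) (gen i)) = cls (El_ideal eps) (fa_smul (qq powi (- eps)) (gen (i + 1)))" for i
    by (simp add: phi_coset phi_gen)
  fix t x
  assume "anti_iso (Elv_ideal eps) (El_ideal eps) t \<and>
           (\<forall>i. t (cls (Elv_ideal eps) (gen i)) = cls (El_ideal eps) (fa_smul (qq powi - eps) (gen (i + 1))))"
  then have t: "anti_iso (Elv_ideal eps) (El_ideal eps) t"
    and tg: "\<And>i. t (cls (Elv_ideal eps) (gen i)) = ?s (cls (Elv_ideal eps) (gen i))"
    using sg by auto
  assume "x \<in> carrier (Elv eps)"
  then obtain f where f: "f \<in> fa_carrier" "x = cls (Elv_ideal eps) f"
    by (auto simp: Elv_def carrier_quot)
  show "t x = ?s x" unfolding f(2)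
    by (rule ai_unique[OF t sa ideal_Elv ideal_El tg f(1)])
qed

end
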